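(* Let $K$ be a field, $b\ge2$ an integer, and let $M=(m_{i,j})_{i,j\ge0}$ be an infinite matrix over $K$ that is $b$-autosimilar and non-degenerate. Then there is a factorization $M=LDU$ where $L$, $D$, $U$ are $b$-autosimilar infinite matrices, $L$ is unipotent lower-triangular, $D$ is diagonal, and $U$ is unipotent upper-triangular.
   Context: An infinite matrix $M=(m_{i,j})_{i,j\ge0}$ is $b$-autosimilar if $m_{0,0}=1$ and $m_{s,t}=\prod_i m_{\sigma_i,\tau_i}$ whenever $s=\sum_i\sigma_ib^i$, $t=\sum_i\tau_ib^i$ are base-$b$ expansions with $\sigma_i,\tau_i\in\{0,\dots,b-1\}$. $M(n)$ denotes the submatrix $(m_{i,j})_{0\le i,j<n}$. A $b$-autosimilar $M$ is non-degenerate if $\det(M(n))$ is invertible (nonzero) for $n=2,\dots,b$. The product $LDU$ of infinite triangular/diagonal matrices is defined entrywise by finite sums. *)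

theory Defs
  imports "Jordan_Normal_Form.Determinant"
begin

definition autosimilar :: "nat \<Rightarrow> (nat \<Rightarrow> nat \<Rightarrow> 'a::comm_ring_1) \<Rightarrow> bool" where
  "autosimilar b m \<longleftrightarrow> m 0 0 = 1 \<and>
     (\<forall>n s t. s < b ^ n \<and> t < b ^ n \<longrightarrow>
        m s t = (\<Prod>i<n. m (s div b ^ i mod b) (t div b ^ i mod b)))"

definition submat :: "(nat \<Rightarrow> nat \<Rightarrow> 'a) \<Rightarrow> nat \<Rightarrow> 'a mat" where
  "submat m n = mat n n (\<lambda>(i, j). m i j)"

definition nondegenerate :: "nat \<Rightarrow> (nat \<Rightarrow> nat \<Rightarrow> 'a::field) \<Rightarrow> bool" where
  "nondegenerate b m \<longleftrightarrow> autosimilar b m \<and> (\<forall>n\<in>{2..b}. det (submat m n) \<noteq> 0)"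

definition unipotent_lower :: "(nat \<Rightarrow> nat \<Rightarrow> 'a::comm_ring_1) \<Rightarrow> bool" where
  "unipotent_lower L \<longleftrightarrow> (\<forall>i. L i i = 1) \<and> (\<forall>i j. i < j \<longrightarrow> L i j = 0)"

definition unipotent_upper :: "(nat \<Rightarrow> nat \<Rightarrow> 'a::comm_ring_1) \<Rightarrow> bool" where
  "unipotent_upper U \<longleftrightarrow> (\<forall>i. U i i = 1) \<and> (\<forall>i j. j < i \<longrightarrow> U i j = 0)"

definition diagonal_inf :: "(nat \<Rightarrow> nat \<Rightarrow> 'a::comm_ring_1) \<Rightarrow> bool" where
  "diagonal_inf D \<longleftrightarrow> (\<forall>i j. i \<noteq> j \<longrightarrow> D i j = 0)"

text \<open>Product L D U of lower-triangular L, diagonal D, upper-triangular U: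
  the entrywise finite sum (only indices i <= s, j <= t can contribute).\<close>
definition LDU_prod :: "(nat \<Rightarrow> nat \<Rightarrow> 'a::comm_ring_1) \<Rightarrow> (nat \<Rightarrow> nat \<Rightarrow> 'a) \<Rightarrow> (nat \<Rightarrow> nat \<Rightarrow> 'a) \<Rightarrow> nat \<Rightarrow> nat \<Rightarrow> 'a" where
  "LDU_prod L D U s t = (\<Sum>i\<le>s. \<Sum>j\<le>t. L s i * D i j * U j t)"

end

theory Submission
  imports Defs
begin

function G :: "(nat \<Rightarrow> nat \<Rightarrow> 'a::field) \<Rightarrow> nat \<Rightarrow> nat \<Rightarrow> 'a" where
 "G A i j = (if i \<le> j then A i j - (\<Sum>k<i. G A i k * G A k j)
             else (A i j - (\<Sum>k<j. G A i k * G A k j)) / G A j j)"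
  by pat_completeness auto
termination by (relation "measure (\<lambda>(A,i,j). 2*min i j + (if i \<le> j then 0 else 1))") auto

declare G.simps[simp del]

lemma sum_digits:
  fixes g :: "nat \<Rightarrow> nat \<Rightarrow> 'a::comm_semiring_1"
  assumes "b > 0"
  shows "(\<Sum>i<b^n. \<Prod>k<n. g k (i div b^k mod b)) = (\<Prod>k<n. \<Sum>c<b. g k c)"
proof (induction n arbitrary: g)
  case 0 then show ?case by simp
next
  case (Suc n)
  have "(\<Sum>i<b^Suc n. \<Prod>k<Suc n. g k (i div b^k mod b))
     = (\<Sum>m<b^n. \<Sum>i\<in>{m*b..<m*b+b}. \<Prod>k<Suc n. g k (i div b^k mod b))"
    by (simp add: sum.nat_group mult.commute)
  also have "\<dots> = (\<Sum>m<b^n. \<Sum>c<b. \<Prod>k<Suc n. g k ((c + m*b) div b^k mod b))"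
  proof (rule sum.cong[OF refl])
    fix m
    show "(\<Sum>i\<in>{m*b..<m*b+b}. \<Prod>k<Suc n. g k (i div b^k mod b)) = (\<Sum>c<b. \<Prod>k<Suc n. g k ((c + m*b) div b^k mod b))"
      using sum.shift_bounds_nat_ivl[of "\<lambda>i. \<Prod>k<Suc n. g k (i div b^k mod b)" 0 "m*b" b]
      by (simp add: atLeast0LessThan add.commute)
  qed
  also have "\<dots> = (\<Sum>m<b^n. \<Sum>c<b. g 0 c * (\<Prod>k<n. g (Suc k) (m div b^k mod b)))"
  proof (intro sum.cong refl)
    fix m c assume c: "c \<in> {..<b}"
    have d: "(c + m*b) div b^Suc k = m div b^k" for k
    proof -
      have "(c + m*b) div b^Suc k = ((c + m*b) div b) div b^k"
        by (simp add: div_mult2_eq mult.commute)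
      also have "(c + m*b) div b = m" using c assms by simp
      finally show ?thesis .
    qed
    show "(\<Prod>k<Suc n. g k ((c + m*b) div b^k mod b)) = g 0 c * (\<Prod>k<n. g (Suc k) (m div b^k mod b))"
      unfolding prod.lessThan_Suc_shift using c d by simp
  qed
  also have "\<dots> = (\<Sum>c<b. g 0 c) * (\<Sum>m<b^n. \<Prod>k<n. g (Suc k) (m div b^k mod b))"
    by (simp add: sum_distrib_left sum_distrib_right sum.swap[of _ "{..<b}"])
  also have "\<dots> = (\<Sum>c<b. g 0 c) * (\<Prod>k<n. \<Sum>c<b. g (Suc k) c)"
    using Suc.IH[of "\<lambda>k. g (Suc k)"] by simp
  also have "\<dots> = (\<Prod>k<Suc n. \<Sum>c<b. g k c)"
    unfolding prod.lessThan_Suc_shift by simp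
  finally show ?case .
qed

definition ext :: "nat \<Rightarrow> (nat \<Rightarrow> nat \<Rightarrow> 'a::comm_ring_1) \<Rightarrow> nat \<Rightarrow> nat \<Rightarrow> 'a" where
  "ext b f s t = (\<Prod>k<s+t+1. f (s div b^k mod b) (t div b^k mod b))"

lemma prod_extend:
  fixes f :: "nat \<Rightarrow> nat \<Rightarrow> 'a::comm_ring_1"
  assumes "f 0 0 = 1" "s < b^n" "t < b^n" "n \<le> m" "b > 0"
  shows "(\<Prod>k<m. f (s div b^k mod b) (t div b^k mod b)) = (\<Prod>k<n. f (s div b^k mod b) (t div b^k mod b))"
proof (rule prod.mono_neutral_right)
  show "\<forall>i\<in>{..<m} - {..<n}. f (s div b ^ i mod b) (t div b ^ i mod b) = 1"
  proof
    fix i assume i: "i \<in> {..<m} - {..<n}"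
    then have "b^n \<le> b^i" using assms by (simp add: power_increasing)
    then have "s div b^i = 0" "t div b^i = 0" using assms by auto
    then show "f (s div b ^ i mod b) (t div b ^ i mod b) = 1" using assms by simp
  qed
qed (use assms in auto)

lemma prod_indep:
  fixes f :: "nat \<Rightarrow> nat \<Rightarrow> 'a::comm_ring_1"
  assumes "f 0 0 = 1" "s < b^n" "t < b^n" "s < b^m" "t < b^m" "b > 0"
  shows "(\<Prod>k<m. f (s div b^k mod b) (t div b^k mod b)) = (\<Prod>k<n. f (s div b^k mod b) (t div b^k mod b))"
  using prod_extend[where f=f and s=s and t=t and b=b and n=n and m="max n m"]
    prod_extend[where f=f and s=s and t=t and b=b and n=m and m="max n m"] assms
  by simp

lemma lt_pow: "b \<ge> 2 \<Longrightarrow> (s::nat) < b^s"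
proof -
  assume "b \<ge> 2"
  have "s < 2^s" by (rule less_exp)
  also have "(2::nat)^s \<le> b^s" using \<open>b \<ge> 2\<close> by (simp add: power_mono)
  finally show ?thesis .
qed

lemma lt_pow2: "b \<ge> 2 \<Longrightarrow> (s::nat) < b^(s+t+1)" "b \<ge> 2 \<Longrightarrow> (t::nat) < b^(s+t+1)"
proof -
  assume b: "b \<ge> 2"
  have "b^s \<le> b^(s+t+1)" "b^t \<le> b^(s+t+1)" using b by (intro power_increasing; simp)+
  then show "s < b^(s+t+1)" "t < b^(s+t+1)" using lt_pow[OF b, of s] lt_pow[OF b, of t] by auto
qed

lemma ext_eq:
  fixes f :: "nat \<Rightarrow> nat \<Rightarrow> 'a::comm_ring_1"
  assumes "f 0 0 = 1" "b \<ge> 2" "s < b^n" "t < b^n"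
  shows "ext b f s t = (\<Prod>k<n. f (s div b^k mod b) (t div b^k mod b))"
  unfolding ext_def using prod_indep[where f=f and s=s and t=t and b=b and n=n and m="s+t+1"] lt_pow2[OF assms(2)] assms by simp

lemma ext_small:
  fixes f :: "nat \<Rightarrow> nat \<Rightarrow> 'a::comm_ring_1"
  assumes "f 0 0 = 1" "b \<ge> 2" "s < b" "t < b"
  shows "ext b f s t = f s t"
  using ext_eq[where f=f and b=b and s=s and t=t and n=1] assms by simp

lemma ext_auto:
  fixes f :: "nat \<Rightarrow> nat \<Rightarrow> 'a::comm_ring_1"
  assumes "f 0 0 = 1" "b \<ge> 2"
  shows "autosimilar b (ext b f)"
  unfolding autosimilar_def
proof (intro conjI allI impI)
  show "ext b f 0 0 = 1" using assms by (simp add: ext_def)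
  fix n s t assume st: "s < b ^ n \<and> t < b ^ n"
  have "ext b f s t = (\<Prod>k<n. f (s div b^k mod b) (t div b^k mod b))"
    using ext_eq[where f=f and b=b] assms st by blast
  also have "\<dots> = (\<Prod>i<n. ext b f (s div b ^ i mod b) (t div b ^ i mod b))"
    using ext_small[where f=f and b=b] assms by (intro prod.cong refl) simp
  finally show "ext b f s t = (\<Prod>i<n. ext b f (s div b ^ i mod b) (t div b ^ i mod b))" .
qed

lemma auto_ext:
  fixes M :: "nat \<Rightarrow> nat \<Rightarrow> 'a::comm_ring_1"
  assumes "autosimilar b M" "b \<ge> 2"
  shows "M = ext b M"
proof (intro ext allI)
  fix s t show "M s t = ext b M s t"
  proof -
    have "s < b^(s+t+1)" "t < b^(s+t+1)" using lt_pow2[OF assms(2)] by auto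
    then show ?thesis using assms unfolding autosimilar_def ext_def by blast
  qed
qed

lemma digit_less:
  fixes b :: nat assumes "b \<ge> 2"
  shows "s < t \<Longrightarrow> \<exists>k. s div b^k mod b < t div b^k mod b"
proof (induction t arbitrary: s rule: less_induct)
  case (less t)
  show ?case
  proof (cases "s mod b < t mod b")
    case True then show ?thesis by (intro exI[of _ 0]) simp
  next
    case False
    have "s div b < t div b"
    proof (rule ccontr)
      assume "\<not> s div b < t div b"
      then have "b * (t div b) \<le> b * (s div b)" by simp
      then have "b * (t div b) + t mod b \<le> b * (s div b) + s mod b" using False by linarith
      then show False using less.prems by simp
    qed
    moreover have "t div b < t" using less.prems assms by simp
    ultimately obtain k where "s div b div b^k mod b < t div b div b^k mod b"
      using less.IH by blast
    then show ?thesis by (intro exI[of _ "Suc k"]) (simp add: div_mult2_eq)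
  qed
qed

lemma digit_pos_bound:
  fixes b :: nat assumes "b \<ge> 2" "0 < t div b^k mod b"
  shows "k < s + t + 1"
proof -
  have "t div b^k \<noteq> 0"
  proof
    assume "t div b^k = 0" then show False using assms(2) by simp
  qed
  then have "b^k \<le> t" using assms by (simp add: div_eq_0_iff not_less)
  then show ?thesis using lt_pow[OF assms(1), of k] by simp
qed

lemma ext_zero:
  fixes f :: "nat \<Rightarrow> nat \<Rightarrow> 'a::comm_ring_1"
  assumes "b \<ge> 2" "k < s+t+1" "f (s div b^k mod b) (t div b^k mod b) = 0"
  shows "ext b f s t = 0"
  unfolding ext_def using assms by (intro prod_zero) auto

lemma ext_lower:
  fixes f :: "nat \<Rightarrow> nat \<Rightarrow> 'a::comm_ring_1"
  assumes "b \<ge> 2" "\<And>x. x < b \<Longrightarrow> f x x = 1" "\<And>x y. x < y \<Longrightarrow> y < b \<Longrightarrow> f x y = 0"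
  shows "unipotent_lower (ext b f)"
  unfolding unipotent_lower_def
proof (intro conjI allI impI)
  fix i show "ext b f i i = 1" unfolding ext_def using assms by (intro prod.neutral) auto
next
  fix i j :: nat assume "i < j"
  then obtain k where k: "i div b^k mod b < j div b^k mod b" using digit_less[OF assms(1)] by blast
  show "ext b f i j = 0"
    by (rule ext_zero[OF assms(1) digit_pos_bound[OF assms(1), of j k i]]) (use k assms in auto)
qed

lemma ext_upper:
  fixes f :: "nat \<Rightarrow> nat \<Rightarrow> 'a::comm_ring_1"
  assumes "b \<ge> 2" "\<And>x. x < b \<Longrightarrow> f x x = 1" "\<And>x y. y < x \<Longrightarrow> x < b \<Longrightarrow> f x y = 0"
  shows "unipotent_upper (ext b f)"
  unfolding unipotent_upper_def
proof (intro conjI allI impI)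
  fix i show "ext b f i i = 1" unfolding ext_def using assms by (intro prod.neutral) auto
next
  fix i j :: nat assume "j < i"
  then obtain k where k: "j div b^k mod b < i div b^k mod b" using digit_less[OF assms(1)] by blast
  have "k < j + i + 1" using digit_pos_bound[OF assms(1), of i k j] k by simp
  show "ext b f i j = 0"
    by (rule ext_zero[OF assms(1), of k]) (use k assms \<open>k < j + i + 1\<close> in auto)
qed

lemma ext_diag:
  fixes f :: "nat \<Rightarrow> nat \<Rightarrow> 'a::comm_ring_1"
  assumes "b \<ge> 2" "\<And>x y. x \<noteq> y \<Longrightarrow> f x y = 0"
  shows "diagonal_inf (ext b f)"
  unfolding diagonal_inf_def
proof (intro allI impI)
  fix i j :: nat assume "i \<noteq> j"
  then consider "i < j" | "j < i" by linarith
  then obtain k where k: "i div b^k mod b \<noteq> j div b^k mod b" "k < i + j + 1"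
  proof cases
    case 1
    then obtain k where k: "i div b^k mod b < j div b^k mod b" using digit_less[OF assms(1)] by blast
    show ?thesis using that[of k] k digit_pos_bound[OF assms(1), of j k i] by simp
  next
    case 2
    then obtain k where k: "j div b^k mod b < i div b^k mod b" using digit_less[OF assms(1)] by blast
    show ?thesis using that[of k] k digit_pos_bound[OF assms(1), of i k j] by simp
  qed
  show "ext b f i j = 0" by (rule ext_zero[OF assms(1) k(2)]) (use k assms in auto)
qed


definition Lb :: "(nat \<Rightarrow> nat \<Rightarrow> 'a::field) \<Rightarrow> nat \<Rightarrow> nat \<Rightarrow> 'a" where
  "Lb A i j = (if i = j then 1 else if j < i then G A i j else 0)"

definition Ub :: "(nat \<Rightarrow> nat \<Rightarrow> 'a::field) \<Rightarrow> nat \<Rightarrow> nat \<Rightarrow> 'a" where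
  "Ub A i j = (if i \<le> j then G A i j else 0)"

lemma dool_eq:
  fixes A :: "nat \<Rightarrow> nat \<Rightarrow> 'a::field"
  assumes nz: "t < s \<Longrightarrow> G A t t \<noteq> 0" and n: "min s t < n"
  shows "A s t = (\<Sum>c<n. Lb A s c * Ub A c t)"
proof -
  have "(\<Sum>c<n. Lb A s c * Ub A c t) = (\<Sum>c<Suc (min s t). Lb A s c * Ub A c t)"
    by (rule sum.mono_neutral_right) (use n in \<open>auto simp: Lb_def Ub_def\<close>)
  also have "\<dots> = (\<Sum>c<min s t. G A s c * G A c t) + Lb A s (min s t) * Ub A (min s t) t"
    by (simp add: Lb_def Ub_def)
  also have "\<dots> = A s t"
  proof (cases "s \<le> t")
    case True
    have "G A s t = A s t - (\<Sum>k<s. G A s k * G A k t)"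
      using True by (subst G.simps) simp
    then show ?thesis using True by (simp add: Lb_def Ub_def min_def)
  next
    case False
    then have "min s t = t" by simp
    moreover have "G A s t = (A s t - (\<Sum>k<t. G A s k * G A k t)) / G A t t"
      using False by (subst G.simps) simp
    ultimately show ?thesis using False nz by (simp add: Lb_def Ub_def)
  qed
  finally show ?thesis by simp
qed

lemma det_submat:
  fixes A :: "nat \<Rightarrow> nat \<Rightarrow> 'a::field"
  assumes nz: "\<And>t. Suc t < n \<Longrightarrow> G A t t \<noteq> 0"
  shows "det (submat A n) = (\<Prod>i<n. G A i i)"
proof -
  define LM where "LM = mat n n (\<lambda>(i,j). Lb A i j)"
  define UM where "UM = mat n n (\<lambda>(i,j). Ub A i j)"
  have LMc: "LM \<in> carrier_mat n n" and UMc: "UM \<in> carrier_mat n n" unfolding LM_def UM_def by auto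
  have eq: "submat A n = LM * UM"
  proof (rule eq_matI)
    fix i j assume ij: "i < dim_row (LM * UM)" "j < dim_col (LM * UM)"
    then have i: "i < n" and j: "j < n" using LMc UMc by auto
    have "(LM * UM) $$ (i,j) = (\<Sum>c<n. Lb A i c * Ub A c j)"
      using i j LMc UMc unfolding LM_def UM_def
      by (simp add: scalar_prod_def atLeast0LessThan)
    also have "\<dots> = A i j"
      by (rule dool_eq[symmetric]) (use nz i j in auto)
    finally show "submat A n $$ (i, j) = (LM * UM) $$ (i, j)"
      using i j by (simp add: submat_def)
  qed (use LMc UMc in \<open>auto simp: submat_def\<close>)
  have "det LM = prod_list (diag_mat LM)"
    by (rule det_lower_triangular[OF _ LMc]) (simp add: LM_def Lb_def)
  also have "\<dots> = 1" using LMc by (simp add: prod_list_diag_prod LM_def Lb_def)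
  finally have dL: "det LM = 1" .
  have "det UM = prod_list (diag_mat UM)"
    by (rule det_upper_triangular[OF _ UMc]) (auto simp: upper_triangular_def UM_def Ub_def)
  also have "\<dots> = (\<Prod>i<n. G A i i)" using UMc
    by (simp add: prod_list_diag_prod UM_def Ub_def atLeast0LessThan)
  finally have dU: "det UM = (\<Prod>i<n. G A i i)" .
  show ?thesis using eq det_mult[OF LMc UMc] dL dU by simp
qed

lemma G_nz:
  fixes A :: "nat \<Rightarrow> nat \<Rightarrow> 'a::field"
  assumes a00: "A 0 0 = 1" and d: "\<forall>n\<in>{2..b}. det (submat A n) \<noteq> 0"
  shows "j < b \<Longrightarrow> G A j j \<noteq> 0"
proof (induction j rule: less_induct)
  case (less j)
  show ?case
  proof (cases j)
    case 0 then show ?thesis using a00 by (subst G.simps) simp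
  next
    case (Suc j')
    have "det (submat A (Suc j)) = (\<Prod>i<Suc j. G A i i)"
      by (rule det_submat) (use less in auto)
    moreover have "det (submat A (Suc j)) \<noteq> 0" using d less.prems Suc by auto
    ultimately show ?thesis by simp
  qed
qed


theorem theorem2p1:
  fixes M :: "nat \<Rightarrow> nat \<Rightarrow> 'a::field" and b :: nat
  assumes "b \<ge> 2" and "nondegenerate b M"
  shows "\<exists>L D U. autosimilar b L \<and> autosimilar b D \<and> autosimilar b U \<and>
           unipotent_lower L \<and> diagonal_inf D \<and> unipotent_upper U \<and>
           M = LDU_prod L D U"
proof -
  have b: "b \<ge> 2" by fact
  have auM: "autosimilar b M" and dets: "\<forall>n\<in>{2..b}. det (submat M n) \<noteq> 0"
    using assms(2) unfolding nondegenerate_def by auto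
  have m00: "M 0 0 = 1" using auM unfolding autosimilar_def by simp
  have nz: "\<And>j. j < b \<Longrightarrow> G M j j \<noteq> 0" using G_nz[OF m00 dets] by blast
  have g00: "G M 0 0 = 1" using m00 by (subst G.simps) simp
  define Lf where "Lf = Lb M"
  define Df where "Df = (\<lambda>i j. if i = j then G M i i else 0)"
  define Uf where "Uf = (\<lambda>i j. if i = j then 1 else if i < j then G M i j / G M i i else (0::'a))"
  have Lf00: "Lf 0 0 = 1" and Df00: "Df 0 0 = 1" and Uf00: "Uf 0 0 = 1"
    using g00 by (simp_all add: Lf_def Lb_def Df_def Uf_def)
  define L where "L = ext b Lf"
  define D where "D = ext b Df"
  define U where "U = ext b Uf"
  have fin: "M x y = (\<Sum>c<b. Lf x c * Df c c * Uf c y)" if xy: "x < b" "y < b" for x y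
  proof -
    have "M x y = (\<Sum>c<b. Lb M x c * Ub M c y)"
      by (rule dool_eq) (use xy nz in auto)
    also have "\<dots> = (\<Sum>c<b. Lf x c * Df c c * Uf c y)"
    proof (intro sum.cong refl)
      fix c assume "c \<in> {..<b}"
      then have "G M c c \<noteq> 0" using nz by simp
      then show "Lb M x c * Ub M c y = Lf x c * Df c c * Uf c y"
        by (auto simp: Lf_def Df_def Uf_def Ub_def)
    qed
    finally show ?thesis .
  qed
  have aL: "autosimilar b L" unfolding L_def by (rule ext_auto[where f=Lf, OF Lf00 b])
  have aD: "autosimilar b D" unfolding D_def by (rule ext_auto[where f=Df, OF Df00 b])
  have aU: "autosimilar b U" unfolding U_def by (rule ext_auto[where f=Uf, OF Uf00 b])
  have uL: "unipotent_lower L" unfolding L_def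
    by (rule ext_lower[OF b]) (auto simp: Lf_def Lb_def)
  have uU: "unipotent_upper U" unfolding U_def
    by (rule ext_upper[OF b]) (auto simp: Uf_def)
  have dD: "diagonal_inf D" unfolding D_def
    by (rule ext_diag[OF b]) (auto simp: Df_def)
  have prodeq: "M s t = LDU_prod L D U s t" for s t
  proof -
    define n where "n = s + t + 1"
    define N where "N = b ^ n"
    have sN: "s < N" and tN: "t < N" using lt_pow2[OF b] unfolding N_def n_def by auto
    have "LDU_prod L D U s t = (\<Sum>i<N. \<Sum>j<N. L s i * D i j * U j t)"
    proof -
      have "LDU_prod L D U s t = (\<Sum>i<N. \<Sum>j\<le>t. L s i * D i j * U j t)"
        unfolding LDU_prod_def
        by (rule sum.mono_neutral_left) (use sN uL in \<open>auto simp: unipotent_lower_def\<close>)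
      also have "\<dots> = (\<Sum>i<N. \<Sum>j<N. L s i * D i j * U j t)"
        by (intro sum.cong refl sum.mono_neutral_left) (use tN uU in \<open>auto simp: unipotent_upper_def\<close>)
      finally show ?thesis .
    qed
    also have "\<dots> = (\<Sum>i<N. L s i * D i i * U i t)"
    proof (intro sum.cong refl)
      fix i assume i: "i \<in> {..<N}"
      have "(\<Sum>j\<in>{i}. L s i * D i j * U j t) = (\<Sum>j<N. L s i * D i j * U j t)"
        by (rule sum.mono_neutral_left) (use i dD in \<open>auto simp: diagonal_inf_def\<close>)
      then show "(\<Sum>j<N. L s i * D i j * U j t) = L s i * D i i * U i t" by simp
    qed
    also have "\<dots> = (\<Sum>i<N. \<Prod>k<n. Lf (s div b^k mod b) (i div b^k mod b) *
                       Df (i div b^k mod b) (i div b^k mod b) * Uf (i div b^k mod b) (t div b^k mod b))"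
    proof (intro sum.cong refl)
      fix i assume i: "i \<in> {..<N}"
      then have iN: "i < b^n" by (simp add: N_def)
      have "L s i = (\<Prod>k<n. Lf (s div b^k mod b) (i div b^k mod b))"
        unfolding L_def by (rule ext_eq[where f=Lf, OF Lf00 b]) (use sN iN N_def in auto)
      moreover have "D i i = (\<Prod>k<n. Df (i div b^k mod b) (i div b^k mod b))"
        unfolding D_def by (rule ext_eq[where f=Df, OF Df00 b]) (use iN in auto)
      moreover have "U i t = (\<Prod>k<n. Uf (i div b^k mod b) (t div b^k mod b))"
        unfolding U_def by (rule ext_eq[where f=Uf, OF Uf00 b]) (use tN iN N_def in auto)
      ultimately show "L s i * D i i * U i t = (\<Prod>k<n. Lf (s div b^k mod b) (i div b^k mod b) *
                       Df (i div b^k mod b) (i div b^k mod b) * Uf (i div b^k mod b) (t div b^k mod b))"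
        by (simp add: prod.distrib)
    qed
    also have "\<dots> = (\<Prod>k<n. \<Sum>c<b. Lf (s div b^k mod b) c * Df c c * Uf c (t div b^k mod b))"
      unfolding N_def
      by (rule sum_digits[where g="\<lambda>k c. Lf (s div b^k mod b) c * Df c c * Uf c (t div b^k mod b)"])
        (use b in simp)
    also have "\<dots> = (\<Prod>k<n. M (s div b^k mod b) (t div b^k mod b))"
      using b by (intro prod.cong refl fin[symmetric]) auto
    also have "\<dots> = M s t"
      using auM sN tN unfolding autosimilar_def N_def by auto
    finally show ?thesis by simp
  qed
  show ?thesis
    by (rule exI[of _ L], rule exI[of _ D], rule exI[of _ U])
      (use aL aD aU uL uU dD prodeq in auto)
qed

end
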